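(* Let $G=G(m,p,n)$ where $m$ is odd or twice an odd integer, and let $P=P_{(0,\lambda)}$ be the standard parabolic subgroup for a partition $\lambda$ of $n$. Then there is a set $J$ of vectors, each a root of a reflection in $P$, such that $N_G(P)=P\rtimes G_J$, where $G_J$ is the setwise stabiliser of $J$ in $G$.
   Context: Let $m,p,n$ be positive integers with $p\mid m$, let $V=\mathbb{C}^n$ with the standard positive definite Hermitian form and orthonormal basis $e_1,\dots,e_n$, and let $\boldsymbol\mu_m$ be the group of complex $m$th roots of unity. $G(m,p,n)$ is the group of linear maps of $V$ of the form $e_i\mapsto\theta_ie_{\sigma(i)}$ with $\sigma\in\mathrm{Sym}(n)$, $\theta_i\in\boldsymbol\mu_m$ and $(\theta_1\cdots\theta_n)^{m/p}=1$. For a partition $\lambda=(n_1\ge\dots\ge n_d)$ of $n$ put $k_0=0$, $k_i=n_1+\cdots+n_i$ and $\Lambda_i=\{e_j:k_{i-1}<j\le k_i\}$; the standard parabolic subgroup $P_{(0,\lambda)}=\prod_{i=1}^d\mathrm{Sym}(n_i)$, where $\mathrm{Sym}(n_i)$ permutes the vectors of $\Lambda_i$ and fixes the other basis vectors. A root of a reflection $r$ is a non-zero vector orthogonal to the fixed hyperplane of $r$. *)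

theory Defs
  imports "Jordan_Normal_Form.Matrix" "HOL-Combinatorics.Permutations"
begin

(* Linear maps of V = C^n are n x n complex matrices (w.r.t. e_1..e_n, here indexed 0..n-1);
   column j of a matrix is the image of e_j. Vectors of V are elements of carrier_vec n. *)

definition mu :: "nat \<Rightarrow> complex set" where
  "mu m = {z. z ^ m = 1}"

(* the monomial matrix e_j \<mapsto> \<theta> j e_(\<sigma> j) *)
definition monomial_mat :: "nat \<Rightarrow> (nat \<Rightarrow> nat) \<Rightarrow> (nat \<Rightarrow> complex) \<Rightarrow> complex mat" where
  "monomial_mat n \<sigma> \<theta> = mat n n (\<lambda>(i, j). if i = \<sigma> j then \<theta> j else 0)"

definition Gmpn :: "nat \<Rightarrow> nat \<Rightarrow> nat \<Rightarrow> complex mat set" where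
  "Gmpn m p n = {monomial_mat n \<sigma> \<theta> | \<sigma> \<theta>.
      \<sigma> permutes {0..<n} \<and> (\<forall>i<n. \<theta> i \<in> mu m) \<and> (\<Prod>i<n. \<theta> i) ^ (m div p) = 1}"

definition is_partition :: "nat list \<Rightarrow> nat \<Rightarrow> bool" where
  "is_partition lam n \<longleftrightarrow> sorted_wrt (\<ge>) lam \<and> (\<forall>x\<in>set lam. 0 < x) \<and> sum_list lam = n"

definition kk :: "nat list \<Rightarrow> nat \<Rightarrow> nat" where
  "kk lam i = sum_list (take i lam)"

(* Lambda_i (as 0-based index set), for i = 1..d *)
definition block :: "nat list \<Rightarrow> nat \<Rightarrow> nat set" where
  "block lam i = {kk lam (i - 1) ..< kk lam i}"

definition std_parabolic :: "nat \<Rightarrow> nat list \<Rightarrow> complex mat set" where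
  "std_parabolic n lam = {monomial_mat n \<sigma> (\<lambda>_. 1) | \<sigma>.
      \<sigma> permutes {0..<n} \<and> (\<forall>i\<in>{1..length lam}. \<sigma> ` block lam i = block lam i)}"

definition fix_space :: "nat \<Rightarrow> complex mat \<Rightarrow> complex vec set" where
  "fix_space n r = {v \<in> carrier_vec n. r *\<^sub>v v = v}"

definition is_hyperplane :: "nat \<Rightarrow> complex vec set \<Rightarrow> bool" where
  "is_hyperplane n H \<longleftrightarrow> (\<exists>a\<in>carrier_vec n. a \<noteq> 0\<^sub>v n \<and> H = {v \<in> carrier_vec n. v \<bullet>c a = 0})"

definition is_reflection :: "nat \<Rightarrow> complex mat \<Rightarrow> bool" where
  "is_reflection n r \<longleftrightarrow> r \<in> carrier_mat n n \<and> r \<noteq> 1\<^sub>m n \<and>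
     (\<exists>k>0. r ^\<^sub>m k = 1\<^sub>m n) \<and> is_hyperplane n (fix_space n r)"

definition is_root :: "nat \<Rightarrow> complex mat \<Rightarrow> complex vec \<Rightarrow> bool" where
  "is_root n r u \<longleftrightarrow> u \<in> carrier_vec n \<and> u \<noteq> 0\<^sub>v n \<and> (\<forall>v\<in>fix_space n r. v \<bullet>c u = 0)"

(* normaliser N_G(P) = {g in G. g P g^-1 = P}, written as gP = Pg (g invertible) *)
definition normaliser :: "complex mat set \<Rightarrow> complex mat set \<Rightarrow> complex mat set" where
  "normaliser G P = {g \<in> G. {g * h | h. h \<in> P} = {h * g | h. h \<in> P}}"

definition set_stabiliser :: "complex mat set \<Rightarrow> complex vec set \<Rightarrow> complex mat set" where
  "set_stabiliser G J = {g \<in> G. (\<lambda>v. g *\<^sub>v v) ` J = J}"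

definition is_semidirect :: "nat \<Rightarrow> complex mat set \<Rightarrow> complex mat set \<Rightarrow> complex mat set \<Rightarrow> bool" where
  "is_semidirect n N P H \<longleftrightarrow> N = {a * b | a b. a \<in> P \<and> b \<in> H} \<and> P \<inter> H = {1\<^sub>m n}
     \<and> (\<forall>g\<in>N. {g * h | h. h \<in> P} = {h * g | h. h \<in> P})"

end

theory Submission
  imports Defs
begin

lemma mono_carrier[simp]: "monomial_mat n \<sigma> \<theta> \<in> carrier_mat n n"
  "dim_row (monomial_mat n \<sigma> \<theta>) = n" "dim_col (monomial_mat n \<sigma> \<theta>) = n"
  by (auto simp: monomial_mat_def)

lemma mono_index: "i < n \<Longrightarrow> j < n \<Longrightarrow> monomial_mat n \<sigma> \<theta> $$ (i,j) = (if i = \<sigma> j then \<theta> j else 0)"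
  by (simp add: monomial_mat_def)

lemma perm_lt: "\<sigma> permutes {0..<(n::nat)} \<Longrightarrow> j < n \<Longrightarrow> \<sigma> j < n"
  using permutes_in_image[of \<sigma> "{0..<n}" j] by auto

lemma inv_perm_lt: "\<sigma> permutes {0..<(n::nat)} \<Longrightarrow> j < n \<Longrightarrow> Hilbert_Choice.inv \<sigma> j < n"
  using perm_lt permutes_inv by blast

lemma sum_perm_delta:
  assumes "\<sigma> permutes {0..<(n::nat)}" "i < n"
  shows "(\<Sum>j\<in>{0..<n}. if i = \<sigma> j then f j else 0) = (f (Hilbert_Choice.inv \<sigma> i) :: 'a::comm_monoid_add)"
proof -
  have "(\<Sum>j\<in>{0..<n}. if i = \<sigma> j then f j else 0) = (\<Sum>j\<in>{0..<n}. if j = Hilbert_Choice.inv \<sigma> i then f j else 0)"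
    by (rule sum.cong) (use permutes_inv_eq[OF assms(1)] in metis)+
  also have "\<dots> = f (Hilbert_Choice.inv \<sigma> i)" using inv_perm_lt[OF assms] by (subst sum.delta) auto
  finally show ?thesis .
qed

lemma mono_mult_vec:
  assumes "\<sigma> permutes {0..<n}" "v \<in> carrier_vec n"
  shows "monomial_mat n \<sigma> \<theta> *\<^sub>v v = vec n (\<lambda>i. \<theta> (Hilbert_Choice.inv \<sigma> i) * v $ (Hilbert_Choice.inv \<sigma> i))"
proof (rule eq_vecI)
  fix i assume "i < dim_vec (vec n (\<lambda>i. \<theta> (Hilbert_Choice.inv \<sigma> i) * v $ (Hilbert_Choice.inv \<sigma> i)))"
  hence i: "i < n" by simp
  have "(monomial_mat n \<sigma> \<theta> *\<^sub>v v) $ i = (\<Sum>j\<in>{0..<n}. (if i = \<sigma> j then \<theta> j else 0) * v $ j)"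
    using i assms(2) by (simp add: scalar_prod_def mono_index)
  also have "\<dots> = (\<Sum>j\<in>{0..<n}. if i = \<sigma> j then \<theta> j * v $ j else 0)"
    by (rule sum.cong) auto
  also have "\<dots> = \<theta> (Hilbert_Choice.inv \<sigma> i) * v $ (Hilbert_Choice.inv \<sigma> i)" by (rule sum_perm_delta[OF assms(1) i])
  finally show "(monomial_mat n \<sigma> \<theta> *\<^sub>v v) $ i = vec n (\<lambda>i. \<theta> (Hilbert_Choice.inv \<sigma> i) * v $ (Hilbert_Choice.inv \<sigma> i)) $ i"
    using i by simp
qed (simp add: mult_mat_vec_def)

lemma mono_mult:
  assumes "\<sigma> permutes {0..<n}"
  shows "monomial_mat n \<pi> \<theta> * monomial_mat n \<sigma> \<phi> = monomial_mat n (\<pi> \<circ> \<sigma>) (\<lambda>j. \<theta> (\<sigma> j) * \<phi> j)"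
proof (rule eq_matI)
  fix i j assume "i < dim_row (monomial_mat n (\<pi> \<circ> \<sigma>) (\<lambda>j. \<theta> (\<sigma> j) * \<phi> j))"
    "j < dim_col (monomial_mat n (\<pi> \<circ> \<sigma>) (\<lambda>j. \<theta> (\<sigma> j) * \<phi> j))"
  hence ij: "i < n" "j < n" by auto
  have sj: "\<sigma> j < n" using perm_lt[OF assms ij(2)] .
  have "(monomial_mat n \<pi> \<theta> * monomial_mat n \<sigma> \<phi>) $$ (i,j)
     = (\<Sum>l\<in>{0..<n}. (if i = \<pi> l then \<theta> l else 0) * (if l = \<sigma> j then \<phi> j else 0))"
    using ij by (simp add: scalar_prod_def mono_index)
  also have "\<dots> = (\<Sum>l\<in>{0..<n}. if l = \<sigma> j then (if i = \<pi> l then \<theta> l else 0) * \<phi> j else 0)"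
    by (rule sum.cong) auto
  also have "\<dots> = (if i = \<pi> (\<sigma> j) then \<theta> (\<sigma> j) else 0) * \<phi> j" using sj by simp
  finally show "(monomial_mat n \<pi> \<theta> * monomial_mat n \<sigma> \<phi>) $$ (i,j) =
     monomial_mat n (\<pi> \<circ> \<sigma>) (\<lambda>j. \<theta> (\<sigma> j) * \<phi> j) $$ (i,j)"
    using ij by (simp add: mono_index)
qed auto

lemma mono_eq:
  assumes "\<pi> permutes {0..<n}" "\<forall>j<n. \<theta> j \<noteq> 0"
    "monomial_mat n \<pi> \<theta> = monomial_mat n \<pi>' \<theta>'" "j < n"
  shows "\<pi> j = \<pi>' j \<and> \<theta> j = \<theta>' j"
proof -
  have pj: "\<pi> j < n" using perm_lt assms by blast
  have "monomial_mat n \<pi> \<theta> $$ (\<pi> j, j) = monomial_mat n \<pi>' \<theta>' $$ (\<pi> j, j)" using assms(3) by simp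
  hence "\<theta> j = (if \<pi> j = \<pi>' j then \<theta>' j else 0)" using pj assms(4) by (simp add: mono_index)
  thus ?thesis using assms(2,4) by (auto split: if_splits)
qed

lemma mono_one: "monomial_mat n id (\<lambda>_. 1) = 1\<^sub>m n"
  by (rule eq_matI) (auto simp: mono_index)

lemma mono_id_eq: "(\<forall>j<n. \<sigma> j = j) \<Longrightarrow> monomial_mat n \<sigma> (\<lambda>_. 1) = 1\<^sub>m n"
  by (rule eq_matI) (auto simp: mono_index)

definition tv :: "nat \<Rightarrow> nat \<Rightarrow> nat \<Rightarrow> complex \<Rightarrow> complex \<Rightarrow> complex vec" where
  "tv n x y u w = vec n (\<lambda>i. if i = x then u else if i = y then w else 0)"

lemma tv_carrier[simp]: "tv n x y u w \<in> carrier_vec n" by (simp add: tv_def)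

lemma tv_eq:
  assumes "tv n x y u w = tv n x' y' u' w'" "x \<noteq> y" "x' \<noteq> y'" "x < n" "y < n" "x' < n" "y' < n"
    "u \<noteq> 0" "w \<noteq> 0" "u' \<noteq> 0" "w' \<noteq> 0"
  shows "(x = x' \<and> y = y' \<and> u = u' \<and> w = w') \<or> (x = y' \<and> y = x' \<and> u = w' \<and> w = u')"
proof -
  have c: "\<And>i. i < n \<Longrightarrow> (if i = x then u else if i = y then w else 0) = (if i = x' then u' else if i = y' then w' else 0)"
  proof -
    fix i assume i: "i < n"
    have "tv n x y u w $ i = tv n x' y' u' w' $ i" using assms(1) by simp
    thus "(if i = x then u else if i = y then w else 0) = (if i = x' then u' else if i = y' then w' else 0)"
      unfolding tv_def index_vec[OF i] .
  qed
  have cx: "u = (if x = x' then u' else if x = y' then w' else 0)" using c[OF assms(4)] by simp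
  have cy: "w = (if y = x' then u' else if y = y' then w' else 0)" using c[OF assms(5)] assms(2) by simp
  show ?thesis
  proof (cases "x = x'")
    case True
    hence u: "u = u'" using cx by simp
    have "y \<noteq> x'" using True assms(2) by simp
    hence "y = y' \<and> w = w'" using cy assms(9) by (cases "y = y'") simp_all
    thus ?thesis using True u by simp
  next
    case False
    hence "x = y' \<and> u = w'" using cx assms(8) by (cases "x = y'") simp_all
    moreover hence "y \<noteq> y'" using assms(2) by simp
    ultimately have "y = x' \<and> w = u'" using cy assms(9) by (cases "y = x'") simp_all
    thus ?thesis using \<open>x = y' \<and> u = w'\<close> by simp
  qed
qed

lemma mono_tv:
  assumes "\<pi> permutes {0..<n}" "x < n" "y < n" "x \<noteq> y"
  shows "monomial_mat n \<pi> \<theta> *\<^sub>v tv n x y u w = tv n (\<pi> x) (\<pi> y) (\<theta> x * u) (\<theta> y * w)"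
proof -
  have pxy: "\<pi> x \<noteq> \<pi> y" using assms permutes_inj unfolding inj_def by metis
  show ?thesis
    unfolding mono_mult_vec[OF assms(1) tv_carrier]
  proof (rule eq_vecI)
    fix i assume "i < dim_vec (tv n (\<pi> x) (\<pi> y) (\<theta> x * u) (\<theta> y * w))"
    hence i: "i < n" by (simp add: tv_def)
    have ex: "(Hilbert_Choice.inv \<pi> i = x) = (i = \<pi> x)" "(Hilbert_Choice.inv \<pi> i = y) = (i = \<pi> y)"
      using permutes_inv_eq[OF assms(1)] by auto
    have il: "Hilbert_Choice.inv \<pi> i < n" using inv_perm_lt[OF assms(1) i] .
    show "vec n (\<lambda>i. \<theta> (Hilbert_Choice.inv \<pi> i) * tv n x y u w $ Hilbert_Choice.inv \<pi> i) $ i =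
          tv n (\<pi> x) (\<pi> y) (\<theta> x * u) (\<theta> y * w) $ i"
      using i il unfolding tv_def index_vec[OF i] index_vec[OF il] ex
      by (cases "i = \<pi> x"; cases "i = \<pi> y") (auto simp: permutes_inverses[OF assms(1)])
  qed (simp add: tv_def)
qed


lemma kk_Suc: "kk lam (Suc i) = kk lam i + (if i < length lam then lam!i else 0)"
  unfolding kk_def by (cases "i < length lam") (auto simp: take_Suc_conv_app_nth)

lemma kk_mono: "i \<le> j \<Longrightarrow> kk lam i \<le> kk lam j"
  by (induction rule: dec_induct) (auto simp: kk_Suc)

lemma kk_len: "kk lam (length lam) = sum_list lam" by (simp add: kk_def)
lemma kk_0[simp]: "kk lam 0 = 0" by (simp add: kk_def)

lemma kk_strict: "\<forall>x\<in>set lam. 0<x \<Longrightarrow> i < length lam \<Longrightarrow> kk lam i < kk lam (Suc i)"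
  by (simp add: kk_Suc)

lemma block_exists:
  assumes "is_partition lam n" "a < n"
  shows "\<exists>i\<in>{1..length lam}. a \<in> block lam i"
proof -
  define i where "i = (LEAST i. a < kk lam i)"
  have ad: "a < kk lam (length lam)" using assms by (simp add: kk_len is_partition_def)
  have ai: "a < kk lam i" unfolding i_def by (rule LeastI[of _ "length lam"]) (rule ad)
  have id: "i \<le> length lam" unfolding i_def by (rule Least_le) (rule ad)
  have i0: "i \<noteq> 0" using ai by (cases i) auto
  have "\<not> a < kk lam (i - 1)" unfolding i_def
    by (rule not_less_Least) (use i0 i_def in auto)
  thus ?thesis using ai id i0 by (auto simp: block_def intro!: bexI[of _ i])
qed

lemma block_unique:
  assumes "a \<in> block lam i" "a \<in> block lam j" "i \<in> {1..length lam}" "j \<in> {1..length lam}"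
  shows "i = j"
proof (rule ccontr)
  assume "i \<noteq> j"
  then consider "i < j" | "j < i" by linarith
  thus False
  proof cases
    case 1
    hence "kk lam i \<le> kk lam (j - 1)" by (intro kk_mono) auto
    thus False using assms by (auto simp: block_def)
  next
    case 2
    hence "kk lam j \<le> kk lam (i - 1)" by (intro kk_mono) auto
    thus False using assms by (auto simp: block_def)
  qed
qed

lemma block_sub:
  assumes "is_partition lam n" "i \<in> {1..length lam}" "a \<in> block lam i"
  shows "a < n"
proof -
  have "kk lam i \<le> kk lam (length lam)" using assms(2) by (intro kk_mono) auto
  thus ?thesis using assms by (auto simp: block_def kk_len is_partition_def)
qed

lemma block_lo:
  assumes "is_partition lam n" "i \<in> {1..length lam}"
  shows "kk lam (i - 1) \<in> block lam i"
proof -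
  have "kk lam (i - 1) < kk lam (Suc (i - 1))"
    using assms by (intro kk_strict) (auto simp: is_partition_def)
  thus ?thesis using assms by (auto simp: block_def)
qed

definition sb :: "nat list \<Rightarrow> nat \<Rightarrow> nat \<Rightarrow> bool" where
  "sb lam a b \<longleftrightarrow> (\<exists>i\<in>{1..length lam}. a \<in> block lam i \<and> b \<in> block lam i)"

lemma sb_refl: "is_partition lam n \<Longrightarrow> a < n \<Longrightarrow> sb lam a a"
  using block_exists unfolding sb_def by blast

lemma sb_sym: "sb lam a b \<Longrightarrow> sb lam b a"
  unfolding sb_def by blast

lemma sb_trans: "sb lam a b \<Longrightarrow> sb lam b c \<Longrightarrow> sb lam a c"
  unfolding sb_def using block_unique by metis

lemma sb_lt: "is_partition lam n \<Longrightarrow> sb lam a b \<Longrightarrow> a < n \<and> b < n"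
  unfolding sb_def using block_sub by blast

lemma sb_block: "sb lam a b \<Longrightarrow> a \<in> block lam i \<Longrightarrow> i \<in> {1..length lam} \<Longrightarrow> b \<in> block lam i"
  unfolding sb_def using block_unique by metis

lemma sb_blockI: "a \<in> block lam i \<Longrightarrow> b \<in> block lam i \<Longrightarrow> i \<in> {1..length lam} \<Longrightarrow> sb lam a b"
  unfolding sb_def by blast

lemma P_cond_iff:
  assumes "is_partition lam n" "\<sigma> permutes {0..<n}"
  shows "(\<forall>i\<in>{1..length lam}. \<sigma> ` block lam i = block lam i) \<longleftrightarrow> (\<forall>a<n. sb lam a (\<sigma> a))"
proof
  assume L: "\<forall>i\<in>{1..length lam}. \<sigma> ` block lam i = block lam i"
  show "\<forall>a<n. sb lam a (\<sigma> a)"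
  proof (intro allI impI)
    fix a assume "a < n"
    then obtain i where i: "i \<in> {1..length lam}" "a \<in> block lam i" using block_exists assms(1) by blast
    hence "\<sigma> a \<in> block lam i" using L by blast
    thus "sb lam a (\<sigma> a)" using i sb_blockI by blast
  qed
next
  assume R: "\<forall>a<n. sb lam a (\<sigma> a)"
  show "\<forall>i\<in>{1..length lam}. \<sigma> ` block lam i = block lam i"
  proof (intro ballI equalityI subsetI)
    fix i x assume i: "i \<in> {1..length lam}" and x: "x \<in> \<sigma> ` block lam i"
    then obtain a where a: "a \<in> block lam i" "x = \<sigma> a" by blast
    have "a < n" using block_sub[OF assms(1) i a(1)] .
    thus "x \<in> block lam i" using R a i sb_block by blast
  next
    fix i x assume i: "i \<in> {1..length lam}" and x: "x \<in> block lam i"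
    have xn: "x < n" using block_sub[OF assms(1) i x] .
    define y where "y = Hilbert_Choice.inv \<sigma> x"
    have yn: "y < n" unfolding y_def using inv_perm_lt[OF assms(2) xn] .
    have xy: "\<sigma> y = x" unfolding y_def using permutes_inverses(1)[OF assms(2)] by simp
    have "sb lam y x" using R yn xy by auto
    hence "y \<in> block lam i" using sb_block[OF sb_sym] x i by blast
    thus "x \<in> \<sigma> ` block lam i" using xy by blast
  qed
qed


lemma tv_swap: "x \<noteq> y \<Longrightarrow> tv n x y u w = tv n y x w u"
  unfolding tv_def by (intro eq_vecI) auto

lemma tv_index: "i < n \<Longrightarrow> tv n x y u w $ i = (if i = x then u else if i = y then w else 0)"
  by (simp add: tv_def)

lemma mono_inj:
  assumes "\<pi> permutes {0..<n}" "\<forall>j<n. \<theta> j \<noteq> 0" "v \<in> carrier_vec n" "w \<in> carrier_vec n"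
    "monomial_mat n \<pi> \<theta> *\<^sub>v v = monomial_mat n \<pi> \<theta> *\<^sub>v w"
  shows "v = w"
proof (rule eq_vecI)
  fix j assume "j < dim_vec w"
  hence j: "j < n" using assms(4) by simp
  have pj: "\<pi> j < n" using perm_lt[OF assms(1) j] .
  have "vec n (\<lambda>i. \<theta> (Hilbert_Choice.inv \<pi> i) * v $ (Hilbert_Choice.inv \<pi> i)) $ (\<pi> j)
     = vec n (\<lambda>i. \<theta> (Hilbert_Choice.inv \<pi> i) * w $ (Hilbert_Choice.inv \<pi> i)) $ (\<pi> j)"
    using assms(5) unfolding mono_mult_vec[OF assms(1) assms(3)] mono_mult_vec[OF assms(1) assms(4)] by simp
  hence "\<theta> j * v $ j = \<theta> j * w $ j" using pj permutes_inverses(2)[OF assms(1)] by simp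
  thus "v $ j = w $ j" using assms(2) j by simp
qed (use assms in simp)

lemma incr_perm_id:
  fixes f :: "nat \<Rightarrow> nat"
  assumes mono: "\<forall>x\<in>{lo..<hi}. \<forall>y\<in>{lo..<hi}. x < y \<longrightarrow> f x < f y"
    and img: "f ` {lo..<hi} = {lo..<hi}"
  shows "\<forall>x\<in>{lo..<hi}. f x = x"
proof -
  have inj: "inj_on f {lo..<hi}"
    unfolding inj_on_def by (metis mono linorder_neqE_nat less_irrefl)
  have "x \<in> {lo..<hi} \<longrightarrow> f x = x" for x
  proof (induction x rule: less_induct)
    case (less x)
    show ?case
    proof
      assume x: "x \<in> {lo..<hi}"
      have fx: "f x \<in> {lo..<hi}" using img x by blast
      have ge: "x \<le> f x"
      proof (rule ccontr)
        assume "\<not> x \<le> f x"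
        hence lt: "f x < x" by simp
        hence "f (f x) = f x" using less fx by blast
        hence "f x = x" using inj fx x unfolding inj_on_def by blast
        thus False using lt by simp
      qed
      obtain z where z: "z \<in> {lo..<hi}" "x = f z" using x img by (metis imageE)
      show "f x = x"
      proof (cases "z < x")
        case True
        hence "f z = z" using less z by blast
        thus ?thesis using z True by simp
      next
        case False
        show ?thesis
        proof (cases "z = x")
          case True thus ?thesis using z by simp
        next
          case False2: False
          hence "x < z" using False by simp
          hence "f x < f z" using mono x z by blast
          thus ?thesis using ge z by simp
        qed
      qed
    qed
  qed
  thus ?thesis by blast
qed

lemma scalar_tv:
  assumes "x \<noteq> y" "x < n" "y < n" "v \<in> carrier_vec n"
  shows "v \<bullet> tv n x y u w = v $ x * u + v $ y * w"
proof -
  have "v \<bullet> tv n x y u w = (\<Sum>i\<in>{0..<n}. v $ i * (if i = x then u else if i = y then w else 0))"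
    by (simp add: scalar_prod_def tv_def)
  also have "\<dots> = (\<Sum>i\<in>{0..<n}. (if i = x then v $ i * u else 0) + (if i = y then v $ i * w else 0))"
    by (rule sum.cong) (use assms(1) in auto)
  also have "\<dots> = v $ x * u + v $ y * w" using assms(2,3) by (simp add: sum.distrib)
  finally show ?thesis .
qed

lemma conj_tv: "conjugate (tv n x y u w) = tv n x y (cnj u) (cnj w)"
  unfolding tv_def conjugate_vec_def by (intro eq_vecI) auto

lemma tv_nz: "x < n \<Longrightarrow> u \<noteq> 0 \<Longrightarrow> tv n x y u w \<noteq> 0\<^sub>v n"
  by (metis index_zero_vec(1) tv_index)

lemma reflection_tr:
  assumes "a < n" "b < n" "a \<noteq> b" "\<zeta> \<noteq> 0"
  shows "is_reflection n (monomial_mat n (Transposition.transpose a b) (\<lambda>_. 1))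
       \<and> is_root n (monomial_mat n (Transposition.transpose a b) (\<lambda>_. 1)) (tv n a b \<zeta> (-\<zeta>))"
proof -
  let ?t = "Transposition.transpose a b"
  let ?r = "monomial_mat n ?t (\<lambda>_. 1)"
  have tp: "?t permutes {0..<n}" using assms by (intro permutes_swap_id) auto
  have invt: "Hilbert_Choice.inv ?t i = ?t i" for i
    using permutes_inv_eq[OF tp, of i "?t i"] by simp
  have r1: "?r \<noteq> 1\<^sub>m n"
  proof
    assume "?r = 1\<^sub>m n"
    hence "?r $$ (a,a) = 1\<^sub>m n $$ (a,a)" by simp
    thus False using assms by (simp add: mono_index)
  qed
  have rr: "?r ^\<^sub>m 2 = 1\<^sub>m n"
  proof -
    have "?r ^\<^sub>m 2 = (1\<^sub>m n * ?r) * ?r" by (simp add: numeral_2_eq_2)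
    also have "\<dots> = ?r * ?r" by simp
    also have "\<dots> = monomial_mat n id (\<lambda>_. 1)" unfolding mono_mult[OF tp] by simp
    finally show ?thesis by (simp add: mono_one)
  qed
  have fixeq: "fix_space n ?r = {v \<in> carrier_vec n. v $ a = v $ b}"
  proof (intro equalityI subsetI)
    fix v :: "complex vec" assume "v \<in> fix_space n ?r"
    hence v: "v \<in> carrier_vec n" "?r *\<^sub>v v = v" by (auto simp: fix_space_def)
    have "(?r *\<^sub>v v) $ a = v $ a" using v by simp
    thus "v \<in> {v \<in> carrier_vec n. v $ a = v $ b}"
      using v assms unfolding mono_mult_vec[OF tp v(1)] invt by simp
  next
    fix v :: "complex vec" assume "v \<in> {v \<in> carrier_vec n. v $ a = v $ b}"
    hence v: "v \<in> carrier_vec n" "v $ a = v $ b" by auto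
    have "?r *\<^sub>v v = v"
      unfolding mono_mult_vec[OF tp v(1)] invt
      by (rule eq_vecI) (use v in \<open>auto simp: transpose_def\<close>)
    thus "v \<in> fix_space n ?r" using v by (simp add: fix_space_def)
  qed
  have sp: "v \<bullet>c tv n a b c (-c) = (v $ a - v $ b) * cnj c" if "v \<in> carrier_vec n" for v c
    unfolding conj_tv using scalar_tv[OF assms(3,1,2) that] by (simp add: algebra_simps)
  have hyp: "is_hyperplane n (fix_space n ?r)"
    unfolding is_hyperplane_def
  proof (intro bexI[of _ "tv n a b 1 (-1)"] conjI)
    show "tv n a b 1 (-1) \<noteq> 0\<^sub>v n" using tv_nz assms by simp
    show "fix_space n ?r = {v \<in> carrier_vec n. v \<bullet>c tv n a b 1 (- 1) = 0}"
      unfolding fixeq using sp[of _ 1] by auto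
  qed simp
  have "is_reflection n ?r"
    unfolding is_reflection_def using r1 rr hyp by (intro conjI exI[of _ 2]) auto
  moreover have "is_root n ?r (tv n a b \<zeta> (-\<zeta>))"
    unfolding is_root_def using tv_nz[OF assms(1,4)] sp fixeq by auto
  ultimately show ?thesis by simp
qed


locale cs =
  fixes m p n :: nat and lam :: "nat list"
  assumes m0: "0 < m" and p0: "0 < p" and n0: "0 < n" and pdm: "p dvd m"
    and modd: "odd m \<or> (\<exists>k. odd k \<and> m = 2 * k)"
    and part: "is_partition lam n"
begin

definition kq :: nat where "kq = (if odd m then m else m div 2)"

lemma kq_cases: "(odd m \<and> kq = m) \<or> (\<exists>k. odd k \<and> m = 2 * k \<and> kq = k)"
proof (cases "odd m")
  case True thus ?thesis by (simp add: kq_def)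
next
  case False
  then obtain k where k: "odd k" "m = 2 * k" using modd by blast
  have "kq = m div 2" using False by (simp add: kq_def)
  hence "kq = k" using k by simp
  thus ?thesis using k by blast
qed

lemma kq_odd: "odd kq" and kq_pos: "0 < kq"
  using kq_cases m0 by auto

lemma mu_kq_m: "z \<in> mu kq \<Longrightarrow> z \<in> mu m"
proof -
  assume z: "z \<in> mu kq"
  from kq_cases show ?thesis
  proof
    assume "odd m \<and> kq = m" thus ?thesis using z by simp
  next
    assume "\<exists>k. odd k \<and> m = 2 * k \<and> kq = k"
    then obtain k where k: "m = 2 * k" "kq = k" by blast
    have "z ^ m = (z ^ k) ^ 2" unfolding k(1) by (simp add: power_mult mult.commute)
    thus ?thesis using z k unfolding mu_def by simp
  qed
qed

lemma mu_split: "z \<in> mu m \<Longrightarrow> z \<in> mu kq \<or> - z \<in> mu kq"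
proof -
  assume z: "z \<in> mu m"
  show ?thesis
  proof (cases "odd m")
    case True thus ?thesis using z by (simp add: kq_def)
  next
    case False
    then obtain k where k: "odd k" "m = 2 * k" using modd by blast
    hence kq: "kq = k" using kq_cases by auto
    have "(z ^ k) ^ 2 = 1" using z k by (simp add: mu_def power_mult[symmetric] mult.commute)
    hence "z ^ k = 1 \<or> z ^ k = -1" by (simp add: power2_eq_1_iff)
    moreover have "(- z) ^ k = - (z ^ k)" using k(1) by (simp add: power_minus_odd)
    ultimately show ?thesis unfolding mu_def kq by auto
  qed
qed

lemma neg1: "- 1 \<notin> mu kq"
  using kq_odd unfolding mu_def by simp

lemma mu_mult: "a \<in> mu k \<Longrightarrow> b \<in> mu k \<Longrightarrow> a * b \<in> mu k"
  unfolding mu_def by (simp add: power_mult_distrib)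

lemma mu_one: "1 \<in> mu k" unfolding mu_def by simp

lemma mu_nz: "0 < k \<Longrightarrow> z \<in> mu k \<Longrightarrow> z \<noteq> 0" unfolding mu_def by (auto simp: power_0_left)

lemma mu_kq_nz: "z \<in> mu kq \<Longrightarrow> z \<noteq> 0" using mu_nz kq_pos by blast
lemma mu_m_nz: "z \<in> mu m \<Longrightarrow> z \<noteq> 0" using mu_nz m0 by blast

abbreviation G where "G \<equiv> Gmpn m p n"
abbreviation P where "P \<equiv> std_parabolic n lam"
abbreviation SB where "SB \<equiv> sb lam"

definition J :: "complex vec set" where
  "J = {tv n a b \<zeta> (-\<zeta>) | \<zeta> a b. \<zeta> \<in> mu kq \<and> a < b \<and> sb lam a b}"

lemma J_carrier: "J \<subseteq> carrier_vec n" unfolding J_def by auto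

lemma J_finite: "finite J"
proof -
  have sub: "J \<subseteq> (\<lambda>(\<zeta>, a, b). tv n a b \<zeta> (-\<zeta>)) ` (mu kq \<times> {0..<n} \<times> {0..<n})"
  proof
    fix v assume "v \<in> J"
    then obtain \<zeta> a b where v: "v = tv n a b \<zeta> (-\<zeta>)" "\<zeta> \<in> mu kq" "a < b" "SB a b" unfolding J_def by blast
    have "a < n" "b < n" using sb_lt[OF part v(4)] by auto
    thus "v \<in> (\<lambda>(\<zeta>, a, b). tv n a b \<zeta> (-\<zeta>)) ` (mu kq \<times> {0..<n} \<times> {0..<n})"
      using v by (intro image_eqI[of _ _ "(\<zeta>, a, b)"]) auto
  qed
  have "finite (mu kq)" unfolding mu_def using kq_pos by (intro finite_roots_unity) simp
  hence "finite (mu kq \<times> {0..<n} \<times> {0..<n})" by simp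
  thus ?thesis by (rule finite_subset[OF sub finite_imageI])
qed

lemma inG: "g \<in> G \<longleftrightarrow> (\<exists>\<pi> \<theta>. g = monomial_mat n \<pi> \<theta> \<and> \<pi> permutes {0..<n} \<and> (\<forall>i<n. \<theta> i \<in> mu m)
   \<and> (\<Prod>i<n. \<theta> i) ^ (m div p) = 1)"
  unfolding Gmpn_def by blast

lemma inP: "h \<in> P \<longleftrightarrow> (\<exists>\<sigma>. h = monomial_mat n \<sigma> (\<lambda>_. 1) \<and> \<sigma> permutes {0..<n} \<and> (\<forall>a<n. SB a (\<sigma> a)))"
  unfolding std_parabolic_def using P_cond_iff[OF part] by blast

definition BP :: "(nat \<Rightarrow> nat) \<Rightarrow> bool" where
  "BP \<pi> \<longleftrightarrow> (\<forall>a<n. \<forall>b<n. SB a b \<longleftrightarrow> SB (\<pi> a) (\<pi> b))"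
definition CB :: "(nat \<Rightarrow> complex) \<Rightarrow> bool" where
  "CB \<theta> \<longleftrightarrow> (\<forall>a b. SB a b \<longrightarrow> \<theta> a = \<theta> b)"

lemma P_BP: "\<sigma> permutes {0..<n} \<Longrightarrow> \<forall>a<n. SB a (\<sigma> a) \<Longrightarrow> BP \<sigma>"
  unfolding BP_def
proof (intro allI impI)
  fix a b assume "\<forall>a<n. SB a (\<sigma> a)" "a < n" "b < n"
  hence s: "SB a (\<sigma> a)" "SB b (\<sigma> b)" by auto
  show "SB a b = SB (\<sigma> a) (\<sigma> b)"
  proof
    assume "SB a b" thus "SB (\<sigma> a) (\<sigma> b)" using s sb_sym sb_trans by metis
  next
    assume "SB (\<sigma> a) (\<sigma> b)" thus "SB a b" using s sb_sym sb_trans by metis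
  qed
qed

lemma tr_P:
  assumes "SB a b"
  shows "monomial_mat n (Transposition.transpose a b) (\<lambda>_. 1) \<in> P"
proof -
  have ab: "a < n" "b < n" using sb_lt[OF part assms] by auto
  show ?thesis unfolding inP
  proof (intro exI conjI allI impI)
    show "Transposition.transpose a b permutes {0..<n}" using ab by (intro permutes_swap_id) auto
    fix x assume "x < n"
    thus "SB x (Transposition.transpose a b x)"
      using assms sb_sym sb_refl[OF part] by (auto simp: transpose_def)
  qed simp
qed

lemma P_G: "h \<in> P \<Longrightarrow> h \<in> G"
proof -
  assume "h \<in> P"
  then obtain \<sigma> where "h = monomial_mat n \<sigma> (\<lambda>_. 1)" "\<sigma> permutes {0..<n}" unfolding inP by blast
  thus ?thesis unfolding inG by (intro exI[of _ \<sigma>] exI[of _ "\<lambda>_::nat. 1::complex"]) (auto simp: mu_one)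
qed

lemma one_P: "1\<^sub>m n \<in> P"
  unfolding inP by (intro exI[of _ id]) (auto simp: mono_one sb_refl[OF part] permutes_id)

lemma one_G: "1\<^sub>m n \<in> G" using P_G one_P by blast

lemma norm_of_BP:
  assumes g: "g = monomial_mat n \<pi> \<theta>" "g \<in> G" and pp: "\<pi> permutes {0..<n}" and bp: "BP \<pi>" and cb: "CB \<theta>"
  shows "g \<in> normaliser G P"
proof -
  let ?i = "Hilbert_Choice.inv \<pi>"
  have ip: "?i permutes {0..<n}" using permutes_inv[OF pp] .
  have "{g * h | h. h \<in> P} = {h * g | h. h \<in> P}"
  proof (intro equalityI subsetI)
    fix x assume "x \<in> {g * h | h. h \<in> P}"
    then obtain \<sigma> where x: "x = g * monomial_mat n \<sigma> (\<lambda>_. 1)" and sp: "\<sigma> permutes {0..<n}"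
      and ss: "\<forall>a<n. SB a (\<sigma> a)" unfolding inP by blast
    define \<sigma>' where "\<sigma>' = \<pi> \<circ> \<sigma> \<circ> ?i"
    have sp': "\<sigma>' permutes {0..<n}" unfolding \<sigma>'_def by (rule permutes_compose[OF ip permutes_compose[OF sp pp]])
    have ss': "\<forall>a<n. SB a (\<sigma>' a)"
    proof (intro allI impI)
      fix a assume a: "a < n"
      have ia: "?i a < n" using inv_perm_lt[OF pp a] .
      have "SB (?i a) (\<sigma> (?i a))" using ss ia by blast
      hence "SB (\<pi> (?i a)) (\<pi> (\<sigma> (?i a)))" using bp ia perm_lt[OF sp ia] unfolding BP_def by blast
      thus "SB a (\<sigma>' a)" unfolding \<sigma>'_def using permutes_inverses(1)[OF pp] by simp
    qed
    have "x = monomial_mat n (\<pi> \<circ> \<sigma>) (\<lambda>j. \<theta> (\<sigma> j) * 1)" using x g mono_mult[OF sp] by simp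
    also have "\<dots> = monomial_mat n (\<sigma>' \<circ> \<pi>) (\<lambda>j. 1 * \<theta> j)"
    proof -
      have "\<sigma>' \<circ> \<pi> = \<pi> \<circ> \<sigma>" unfolding \<sigma>'_def using permutes_inv_o(2)[OF pp] by (simp add: comp_assoc)
      moreover have "(\<lambda>j. \<theta> (\<sigma> j) * 1) = (\<lambda>j. 1 * \<theta> j)"
      proof
        fix j show "\<theta> (\<sigma> j) * 1 = 1 * \<theta> j"
        proof (cases "j < n")
          case True
          hence "SB j (\<sigma> j)" using ss by blast
          hence "\<theta> j = \<theta> (\<sigma> j)" using cb unfolding CB_def by blast
          thus ?thesis by simp
        next
          case False thus ?thesis using permutes_not_in[OF sp] by simp
        qed
      qed
      ultimately show ?thesis by simp
    qed
    also have "\<dots> = monomial_mat n \<sigma>' (\<lambda>_. 1) * g" using g mono_mult[OF pp] by simp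
    finally show "x \<in> {h * g | h. h \<in> P}" using sp' ss' unfolding inP by blast
  next
    fix x assume "x \<in> {h * g | h. h \<in> P}"
    then obtain \<sigma> where x: "x = monomial_mat n \<sigma> (\<lambda>_. 1) * g" and sp: "\<sigma> permutes {0..<n}"
      and ss: "\<forall>a<n. SB a (\<sigma> a)" unfolding inP by blast
    define \<sigma>' where "\<sigma>' = ?i \<circ> \<sigma> \<circ> \<pi>"
    have sp': "\<sigma>' permutes {0..<n}" unfolding \<sigma>'_def by (rule permutes_compose[OF pp permutes_compose[OF sp ip]])
    have ss': "\<forall>a<n. SB a (\<sigma>' a)"
    proof (intro allI impI)
      fix a assume a: "a < n"
      have pa: "\<pi> a < n" using perm_lt[OF pp a] .
      have sa: "\<sigma>' a < n" using perm_lt[OF sp' a] .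
      have "SB (\<pi> a) (\<sigma> (\<pi> a))" using ss pa by blast
      moreover have "\<pi> (\<sigma>' a) = \<sigma> (\<pi> a)" unfolding \<sigma>'_def using permutes_inverses(1)[OF pp] by simp
      moreover have "SB a (\<sigma>' a) \<longleftrightarrow> SB (\<pi> a) (\<pi> (\<sigma>' a))" using bp a sa unfolding BP_def by blast
      ultimately show "SB a (\<sigma>' a)" by simp
    qed
    have "x = monomial_mat n (\<sigma> \<circ> \<pi>) (\<lambda>j. 1 * \<theta> j)" using x g mono_mult[OF pp] by simp
    also have "\<dots> = monomial_mat n (\<pi> \<circ> \<sigma>') (\<lambda>j. \<theta> (\<sigma>' j) * 1)"
    proof -
      have "\<pi> \<circ> \<sigma>' = \<sigma> \<circ> \<pi>" unfolding \<sigma>'_def using permutes_inv_o(1)[OF pp]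
        by (simp add: comp_assoc[symmetric])
      moreover have "(\<lambda>j. \<theta> (\<sigma>' j) * 1) = (\<lambda>j. 1 * \<theta> j)"
      proof
        fix j show "\<theta> (\<sigma>' j) * 1 = 1 * \<theta> j"
        proof (cases "j < n")
          case True
          hence "SB j (\<sigma>' j)" using ss' by blast
          hence "\<theta> j = \<theta> (\<sigma>' j)" using cb unfolding CB_def by blast
          thus ?thesis by simp
        next
          case False thus ?thesis using permutes_not_in[OF sp'] by simp
        qed
      qed
      ultimately show ?thesis by simp
    qed
    also have "\<dots> = g * monomial_mat n \<sigma>' (\<lambda>_. 1)" using g mono_mult[OF sp'] by simp
    finally show "x \<in> {g * h | h. h \<in> P}" using sp' ss' unfolding inP by blast
  qed
  thus ?thesis using g unfolding normaliser_def by blast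
qed


lemma BP_of_norm:
  assumes g: "g = monomial_mat n \<pi> \<theta>" and pp: "\<pi> permutes {0..<n}" and nz: "\<forall>j<n. \<theta> j \<noteq> 0"
    and gN: "g \<in> normaliser G P"
  shows "BP \<pi> \<and> CB \<theta>"
proof -
  have eq: "{g * h | h. h \<in> P} = {h * g | h. h \<in> P}" using gN unfolding normaliser_def by blast
  have fw: "SB (\<pi> a) (\<pi> b) \<and> \<theta> a = \<theta> b" if ab: "SB a b" "a \<noteq> b" for a b
  proof -
    let ?t = "Transposition.transpose a b"
    have abn: "a < n" "b < n" using sb_lt[OF part ab(1)] by auto
    have tp: "?t permutes {0..<n}" using abn by (intro permutes_swap_id) auto
    have "g * monomial_mat n ?t (\<lambda>_. 1) \<in> {h * g | h. h \<in> P}" using eq tr_P[OF ab(1)] by blast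
    then obtain \<sigma> where e: "g * monomial_mat n ?t (\<lambda>_. 1) = monomial_mat n \<sigma> (\<lambda>_. 1) * g"
      and sp: "\<sigma> permutes {0..<n}" and ss: "\<forall>a<n. SB a (\<sigma> a)" unfolding inP by blast
    have "monomial_mat n (\<pi> \<circ> ?t) (\<lambda>j. \<theta> (?t j) * 1) = monomial_mat n (\<sigma> \<circ> \<pi>) (\<lambda>j. 1 * \<theta> j)"
      using e unfolding g mono_mult[OF tp] mono_mult[OF pp] .
    from mono_eq[OF permutes_compose[OF tp pp] _ this abn(1)]
    have "\<pi> b = \<sigma> (\<pi> a) \<and> \<theta> b = \<theta> a" using nz abn by (simp add: transpose_def)
    moreover have "SB (\<pi> a) (\<sigma> (\<pi> a))" using ss perm_lt[OF pp abn(1)] by blast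
    ultimately show ?thesis by simp
  qed
  have bw: "SB a b" if ab: "SB (\<pi> a) (\<pi> b)" "a \<noteq> b" "a < n" "b < n" for a b
  proof -
    have pab: "\<pi> a \<noteq> \<pi> b" using ab(2) permutes_inj[OF pp] unfolding inj_def by blast
    let ?t = "Transposition.transpose (\<pi> a) (\<pi> b)"
    have tp: "?t permutes {0..<n}" using perm_lt[OF pp] ab by (intro permutes_swap_id) auto
    have "monomial_mat n ?t (\<lambda>_. 1) * g \<in> {g * h | h. h \<in> P}" using eq tr_P[OF ab(1)] by blast
    then obtain \<sigma> where e: "monomial_mat n ?t (\<lambda>_. 1) * g = g * monomial_mat n \<sigma> (\<lambda>_. 1)"
      and sp: "\<sigma> permutes {0..<n}" and ss: "\<forall>a<n. SB a (\<sigma> a)" unfolding inP by blast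
    have "monomial_mat n (?t \<circ> \<pi>) (\<lambda>j. 1 * \<theta> j) = monomial_mat n (\<pi> \<circ> \<sigma>) (\<lambda>j. \<theta> (\<sigma> j) * 1)"
      using e unfolding g mono_mult[OF sp] mono_mult[OF pp] .
    from mono_eq[OF permutes_compose[OF pp tp] _ this ab(3)]
    have "\<pi> b = \<pi> (\<sigma> a)" using nz ab by simp
    hence "b = \<sigma> a" using permutes_inj[OF pp] unfolding inj_def by blast
    thus ?thesis using ss ab(3) by blast
  qed
  have "BP \<pi>" unfolding BP_def
  proof (intro allI impI iffI)
    fix a b assume "a < n" "b < n" "SB a b"
    thus "SB (\<pi> a) (\<pi> b)" using fw[of a b] sb_refl[OF part perm_lt[OF pp]] by (cases "a = b") auto
  next
    fix a b assume "a < n" "b < n" "SB (\<pi> a) (\<pi> b)"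
    thus "SB a b" using bw[of a b] sb_refl[OF part] by (cases "a = b") auto
  qed
  moreover have "CB \<theta>" unfolding CB_def using fw by metis
  ultimately show ?thesis by blast
qed

lemma J_mem: "\<zeta> \<in> mu kq \<Longrightarrow> a < b \<Longrightarrow> SB a b \<Longrightarrow> tv n a b \<zeta> (-\<zeta>) \<in> J"
  unfolding J_def by blast

lemma BP_of_stab:
  assumes g: "g = monomial_mat n \<pi> \<theta>" and pp: "\<pi> permutes {0..<n}" and nz: "\<forall>j<n. \<theta> j \<noteq> 0"
    and st: "(\<lambda>v. g *\<^sub>v v) ` J = J"
  shows "BP \<pi> \<and> CB \<theta>"
proof -
  have fw: "SB (\<pi> a) (\<pi> b) \<and> \<theta> a = \<theta> b" if ab: "SB a b" "a < b" for a b
  proof -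
    have abn: "a < n" "b < n" using sb_lt[OF part ab(1)] by auto
    have pab: "\<pi> a \<noteq> \<pi> b" using ab(2) permutes_inj[OF pp] unfolding inj_def by (metis less_irrefl)
    have "g *\<^sub>v tv n a b 1 (-1) \<in> J" using st J_mem[OF mu_one ab(2,1)] by blast
    then obtain \<zeta> c d where e: "g *\<^sub>v tv n a b 1 (-1) = tv n c d \<zeta> (-\<zeta>)" and z: "\<zeta> \<in> mu kq"
      and cd: "c < d" "SB c d" unfolding J_def by blast
    have cdn: "c < n" "d < n" using sb_lt[OF part cd(2)] by auto
    have "tv n (\<pi> a) (\<pi> b) (\<theta> a * 1) (\<theta> b * (-1)) = tv n c d \<zeta> (-\<zeta>)"
      using e unfolding g mono_tv[OF pp abn(1,2) less_imp_neq[OF ab(2)]] by simp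
    from tv_eq[OF this pab _ perm_lt[OF pp abn(1)] perm_lt[OF pp abn(2)] cdn]
    have "(\<pi> a = c \<and> \<pi> b = d \<and> \<theta> a = \<zeta> \<and> - \<theta> b = - \<zeta>) \<or> (\<pi> a = d \<and> \<pi> b = c \<and> \<theta> a = - \<zeta> \<and> - \<theta> b = \<zeta>)"
      using cd(1) nz abn mu_kq_nz[OF z] by simp
    thus ?thesis using cd(2) sb_sym by auto
  qed
  have fw': "SB (\<pi> a) (\<pi> b) \<and> \<theta> a = \<theta> b" if ab: "SB a b" "a \<noteq> b" for a b
  proof (cases "a < b")
    case True thus ?thesis using fw ab by blast
  next
    case False
    hence "b < a" using ab by simp
    thus ?thesis using fw[of b a] ab sb_sym by metis
  qed
  have bw: "SB a b" if ab: "SB (\<pi> a) (\<pi> b)" "\<pi> a < \<pi> b" "a < n" "b < n" for a b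
  proof -
    have "tv n (\<pi> a) (\<pi> b) 1 (-1) \<in> J" using J_mem[OF mu_one ab(2,1)] .
    then obtain v where v: "v \<in> J" "tv n (\<pi> a) (\<pi> b) 1 (-1) = g *\<^sub>v v" using st by blast
    then obtain \<zeta> x y where vv: "v = tv n x y \<zeta> (-\<zeta>)" and z: "\<zeta> \<in> mu kq"
      and xy: "x < y" "SB x y" unfolding J_def by blast
    have xyn: "x < n" "y < n" using sb_lt[OF part xy(2)] by auto
    have pxy: "\<pi> x \<noteq> \<pi> y" using xy(1) permutes_inj[OF pp] unfolding inj_def by (metis less_irrefl)
    have "tv n (\<pi> a) (\<pi> b) 1 (-1) = tv n (\<pi> x) (\<pi> y) (\<theta> x * \<zeta>) (\<theta> y * (-\<zeta>))"
      using v(2) unfolding vv g mono_tv[OF pp xyn(1,2) less_imp_neq[OF xy(1)]] by simp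
    from tv_eq[OF this _ pxy perm_lt[OF pp ab(3)] perm_lt[OF pp ab(4)] perm_lt[OF pp xyn(1)] perm_lt[OF pp xyn(2)]]
    have "(\<pi> a = \<pi> x \<and> \<pi> b = \<pi> y) \<or> (\<pi> a = \<pi> y \<and> \<pi> b = \<pi> x)"
      using ab(2) nz xyn mu_kq_nz[OF z] by auto
    hence "(a = x \<and> b = y) \<or> (a = y \<and> b = x)" using permutes_inj[OF pp] unfolding inj_def by blast
    thus ?thesis using xy(2) sb_sym by auto
  qed
  have "BP \<pi>" unfolding BP_def
  proof (intro allI impI iffI)
    fix a b assume "a < n" "b < n" "SB a b"
    thus "SB (\<pi> a) (\<pi> b)" using fw'[of a b] sb_refl[OF part perm_lt[OF pp]] by (cases "a = b") auto
  next
    fix a b assume ab: "a < n" "b < n" "SB (\<pi> a) (\<pi> b)"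
    show "SB a b"
    proof (cases "a = b")
      case True thus ?thesis using sb_refl[OF part ab(1)] by simp
    next
      case False
      hence "\<pi> a \<noteq> \<pi> b" using permutes_inj[OF pp] unfolding inj_def by blast
      hence "\<pi> a < \<pi> b \<or> \<pi> b < \<pi> a" by auto
      thus ?thesis using bw[of a b] bw[of b a] ab sb_sym by blast
    qed
  qed
  moreover have "CB \<theta>" unfolding CB_def using fw' by metis
  ultimately show ?thesis by blast
qed



lemma P_stab_one:
  assumes hP: "h \<in> P" and st: "(\<lambda>v. h *\<^sub>v v) ` J = J"
  shows "h = 1\<^sub>m n"
proof -
  obtain \<sigma> where h: "h = monomial_mat n \<sigma> (\<lambda>_. 1)" and sp: "\<sigma> permutes {0..<n}"
    and ss: "\<forall>a<n. SB a (\<sigma> a)" using hP unfolding inP by blast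
  have incr: "\<sigma> a < \<sigma> b" if ab: "SB a b" "a < b" for a b
  proof -
    have abn: "a < n" "b < n" using sb_lt[OF part ab(1)] by auto
    have pab: "\<sigma> a \<noteq> \<sigma> b" using ab(2) permutes_inj[OF sp] unfolding inj_def by (metis less_irrefl)
    have "h *\<^sub>v tv n a b 1 (-1) \<in> J" using st J_mem[OF mu_one ab(2,1)] by blast
    then obtain \<zeta> c d where e: "h *\<^sub>v tv n a b 1 (-1) = tv n c d \<zeta> (-\<zeta>)" and z: "\<zeta> \<in> mu kq"
      and cd: "c < d" "SB c d" unfolding J_def by blast
    have cdn: "c < n" "d < n" using sb_lt[OF part cd(2)] by auto
    have "tv n (\<sigma> a) (\<sigma> b) 1 (-1) = tv n c d \<zeta> (-\<zeta>)"
      using e unfolding h mono_tv[OF sp abn(1,2) less_imp_neq[OF ab(2)]] by simp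
    from tv_eq[OF this pab _ perm_lt[OF sp abn(1)] perm_lt[OF sp abn(2)] cdn]
    have "(\<sigma> a = c \<and> \<sigma> b = d) \<or> (\<sigma> a = d \<and> \<sigma> b = c \<and> \<zeta> = -1)"
      using cd(1) mu_kq_nz[OF z] by auto
    thus ?thesis using cd(1) z neg1 by auto
  qed
  have idb: "\<sigma> x = x" if x: "x < n" for x
  proof -
    obtain i where i: "i \<in> {1..length lam}" "x \<in> block lam i" using block_exists[OF part x] by blast
    have img: "\<sigma> ` {kk lam (i-1)..<kk lam i} = {kk lam (i-1)..<kk lam i}"
      using P_cond_iff[OF part sp] ss i(1) unfolding block_def by blast
    have "\<forall>x\<in>{kk lam (i-1)..<kk lam i}. \<forall>y\<in>{kk lam (i-1)..<kk lam i}. x < y \<longrightarrow> \<sigma> x < \<sigma> y"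
      using incr sb_blockI[OF _ _ i(1)] unfolding block_def by blast
    from incr_perm_id[OF this img] show ?thesis using i(2) unfolding block_def by blast
  qed
  show ?thesis unfolding h by (rule mono_id_eq) (use idb in blast)
qed

lemma stab_of_sub:
  assumes g: "g = monomial_mat n \<pi> \<theta>" and pp: "\<pi> permutes {0..<n}" and nz: "\<forall>j<n. \<theta> j \<noteq> 0"
    and sub: "(\<lambda>v. g *\<^sub>v v) ` J \<subseteq> J"
  shows "(\<lambda>v. g *\<^sub>v v) ` J = J"
proof (rule card_subset_eq[OF J_finite sub])
  have "inj_on (\<lambda>v. g *\<^sub>v v) J"
    unfolding inj_on_def using mono_inj[OF pp nz] J_carrier g by blast
  thus "card ((\<lambda>v. g *\<^sub>v v) ` J) = card J" by (rule card_image)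
qed

definition bi :: "nat \<Rightarrow> nat" where
  "bi a = (THE i. i \<in> {1..length lam} \<and> a \<in> block lam i)"

lemma bi: "a < n \<Longrightarrow> bi a \<in> {1..length lam} \<and> a \<in> block lam (bi a)"
  unfolding bi_def
  by (rule theI') (use block_exists[OF part] block_unique in blast)

lemma bi_eq: "a \<in> block lam i \<Longrightarrow> i \<in> {1..length lam} \<Longrightarrow> bi a = i"
  using bi[OF block_sub[OF part]] block_unique block_sub[OF part] by blast



lemma decomp:
  assumes g: "g = monomial_mat n \<pi> \<theta>" and pp: "\<pi> permutes {0..<n}" and th: "\<forall>i<n. \<theta> i \<in> mu m"
    and pr: "(\<Prod>i<n. \<theta> i) ^ (m div p) = 1" and bp: "BP \<pi>" and cb: "CB \<theta>"
  shows "\<exists>a b. a \<in> P \<and> b \<in> G \<and> (\<lambda>v. b *\<^sub>v v) ` J = J \<and> g = a * b"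
proof -
  have nz: "\<forall>j<n. \<theta> j \<noteq> 0" using th mu_m_nz by blast
  define lo where "lo i = kk lam (i - 1)" for i
  define hi where "hi i = kk lam i" for i
  have blk: "block lam i = {lo i..<hi i}" for i unfolding block_def lo_def hi_def ..
  define tg where "tg i = bi (\<pi> (lo i))" for i
  define q where "q a = (if a < n then (if \<theta> a \<in> mu kq then lo (tg (bi a)) + (a - lo (bi a))
      else hi (tg (bi a)) - 1 - (a - lo (bi a))) else a)" for a
  have F2: "tg i \<in> {1..length lam} \<and> \<pi> ` block lam i = block lam (tg i)" if i: "i \<in> {1..length lam}" for i
  proof -
    have l: "lo i \<in> block lam i" using block_lo[OF part i] unfolding lo_def .
    have ln: "lo i < n" using block_sub[OF part i l] .
    have pl: "\<pi> (lo i) < n" using perm_lt[OF pp ln] .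
    have t: "tg i \<in> {1..length lam}" "\<pi> (lo i) \<in> block lam (tg i)" using bi[OF pl] unfolding tg_def by auto
    have "\<pi> ` block lam i = block lam (tg i)"
    proof (intro equalityI subsetI)
      fix y assume "y \<in> \<pi> ` block lam i"
      then obtain x where x: "x \<in> block lam i" "y = \<pi> x" by blast
      have xn: "x < n" using block_sub[OF part i x(1)] .
      have "SB x (lo i)" using sb_blockI[OF x(1) l i] .
      hence "SB (\<pi> x) (\<pi> (lo i))" using bp xn ln unfolding BP_def by blast
      thus "y \<in> block lam (tg i)" using x(2) t sb_block[OF sb_sym] by blast
    next
      fix c assume c: "c \<in> block lam (tg i)"
      have cn: "c < n" using block_sub[OF part t(1) c] .
      define y where "y = Hilbert_Choice.inv \<pi> c"
      have yn: "y < n" unfolding y_def using inv_perm_lt[OF pp cn] .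
      have py: "\<pi> y = c" unfolding y_def using permutes_inverses(1)[OF pp] by simp
      have "SB (\<pi> y) (\<pi> (lo i))" using sb_blockI[OF _ t(2) t(1)] c py by blast
      hence "SB y (lo i)" using bp yn ln unfolding BP_def by blast
      hence "y \<in> block lam i" using sb_block[OF sb_sym] l i by blast
      thus "c \<in> \<pi> ` block lam i" using py by blast
    qed
    thus ?thesis using t by blast
  qed
  have F3: "hi (tg i) - lo (tg i) = hi i - lo i" if i: "i \<in> {1..length lam}" for i
  proof -
    have "card (\<pi> ` block lam i) = card (block lam i)"
      by (rule card_image) (use permutes_inj[OF pp] in \<open>auto simp: inj_on_def inj_def\<close>)
    thus ?thesis using F2[OF i] unfolding blk by simp
  qed
  have ne: "lo i < hi i" if i: "i \<in> {1..length lam}" for i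
    using block_lo[OF part i] unfolding blk lo_def by simp
  have F4: "q a \<in> block lam (tg i) \<and> (\<theta> a \<in> mu kq \<longrightarrow> q a = lo (tg i) + (a - lo i))
      \<and> (\<theta> a \<notin> mu kq \<longrightarrow> q a = hi (tg i) - 1 - (a - lo i))"
    if i: "i \<in> {1..length lam}" and a: "a \<in> block lam i" for i a
  proof -
    have an: "a < n" using block_sub[OF part i a] .
    have bia: "bi a = i" using bi_eq[OF a i] .
    have la: "lo i \<le> a" "a < hi i" using a unfolding blk by auto
    have tj: "tg i \<in> {1..length lam}" using F2[OF i] by blast
    have c: "hi (tg i) - lo (tg i) = hi i - lo i" using F3[OF i] .
    have nej: "lo (tg i) < hi (tg i)" using ne[OF tj] .
    show ?thesis unfolding q_def bia blk using an la c nej by auto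
  qed
  have qn: "q a < n" if "a < n" for a
  proof -
    have b: "bi a \<in> {1..length lam}" "a \<in> block lam (bi a)" using bi[OF that] by auto
    have "tg (bi a) \<in> {1..length lam}" using F2[OF b(1)] by blast
    thus ?thesis using F4[OF b] block_sub[OF part] by blast
  qed
  have qinj: "inj_on q {0..<n}"
  proof (rule inj_onI)
    fix a b assume a: "a \<in> {0..<n}" and b: "b \<in> {0..<n}" and e: "q a = q b"
    have ia: "bi a \<in> {1..length lam}" "a \<in> block lam (bi a)" using bi a by auto
    have ib: "bi b \<in> {1..length lam}" "b \<in> block lam (bi b)" using bi b by auto
    have "q a \<in> block lam (tg (bi a))" "q b \<in> block lam (tg (bi b))" using F4[OF ia] F4[OF ib] by auto
    hence "tg (bi a) = tg (bi b)" using e block_unique F2[OF ia(1)] F2[OF ib(1)] by metis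
    hence "\<pi> ` block lam (bi a) = \<pi> ` block lam (bi b)" using F2[OF ia(1)] F2[OF ib(1)] by simp
    hence "block lam (bi a) = block lam (bi b)"
      using permutes_inj[OF pp] by (simp add: inj_image_eq_iff)
    hence same: "bi a = bi b" using ia ib block_unique by blast
    have "SB a b" using sb_blockI[OF ia(2) _ ia(1)] ib(2) same by simp
    hence tt: "\<theta> a = \<theta> b" using cb unfolding CB_def by blast
    have la: "lo (bi a) \<le> a" "lo (bi a) \<le> b" "a < hi (bi a)" "b < hi (bi a)"
      using ia(2) ib(2) same unfolding blk by auto
    have c: "hi (tg (bi a)) - lo (tg (bi a)) = hi (bi a) - lo (bi a)" using F3[OF ia(1)] .
    have F4a: "(\<theta> a \<in> mu kq \<longrightarrow> q a = lo (tg (bi a)) + (a - lo (bi a)))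
      \<and> (\<theta> a \<notin> mu kq \<longrightarrow> q a = hi (tg (bi a)) - 1 - (a - lo (bi a)))" using F4[OF ia] by blast
    have F4b: "(\<theta> b \<in> mu kq \<longrightarrow> q b = lo (tg (bi a)) + (b - lo (bi a)))
      \<and> (\<theta> b \<notin> mu kq \<longrightarrow> q b = hi (tg (bi a)) - 1 - (b - lo (bi a)))" using F4[OF ib] same by simp
    show "a = b" using F4a F4b tt e la c by (cases "\<theta> a \<in> mu kq") auto
  qed
  have qimg: "q ` {0..<n} = {0..<n}"
    by (rule endo_inj_surj) (use qn qinj in auto)
  have qp: "q permutes {0..<n}"
  proof -
    have bj: "bij_betw q {0..<n} {0..<n}" unfolding bij_betw_def using qinj qimg by blast
    have st: "q x = x" if "x \<notin> {0..<n}" for x using that by (simp add: q_def)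
    show ?thesis using bij_imp_permutes[OF bj st] by blast
  qed
  define \<sigma> where "\<sigma> = \<pi> \<circ> Hilbert_Choice.inv q"
  have sp: "\<sigma> permutes {0..<n}" unfolding \<sigma>_def by (rule permutes_compose[OF permutes_inv[OF qp] pp])
  have ss: "\<forall>a<n. SB a (\<sigma> a)"
  proof (intro allI impI)
    fix a assume a: "a < n"
    define x where "x = Hilbert_Choice.inv q a"
    have xn: "x < n" unfolding x_def using inv_perm_lt[OF qp a] .
    have qx: "q x = a" unfolding x_def using permutes_inverses(1)[OF qp] by simp
    have ix: "bi x \<in> {1..length lam}" "x \<in> block lam (bi x)" using bi[OF xn] by auto
    have "a \<in> block lam (tg (bi x))" using F4[OF ix] qx by blast
    moreover have "\<sigma> a \<in> block lam (tg (bi x))" using F2[OF ix(1)] ix(2) qx unfolding \<sigma>_def x_def by auto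
    ultimately show "SB a (\<sigma> a)" using sb_blockI F2[OF ix(1)] by blast
  qed
  define h where "h = monomial_mat n q \<theta>"
  have hG: "h \<in> G" unfolding inG h_def using qp th pr by blast
  have gh: "g = monomial_mat n \<sigma> (\<lambda>_. 1) * h"
  proof -
    have "monomial_mat n \<sigma> (\<lambda>_. 1) * h = monomial_mat n (\<sigma> \<circ> q) (\<lambda>j. 1 * \<theta> j)"
      unfolding h_def by (rule mono_mult[OF qp])
    moreover have "\<sigma> \<circ> q = \<pi>" unfolding \<sigma>_def using permutes_inv_o(2)[OF qp] by (simp add: comp_assoc)
    ultimately show ?thesis using g by simp
  qed
  have sub: "(\<lambda>v. h *\<^sub>v v) ` J \<subseteq> J"
  proof
    fix w assume "w \<in> (\<lambda>v. h *\<^sub>v v) ` J"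
    then obtain \<zeta> a b where w: "w = h *\<^sub>v tv n a b \<zeta> (-\<zeta>)" and z: "\<zeta> \<in> mu kq"
      and ab: "a < b" "SB a b" unfolding J_def by blast
    have abn: "a < n" "b < n" using sb_lt[OF part ab(2)] by auto
    have ia: "bi a \<in> {1..length lam}" "a \<in> block lam (bi a)" using bi abn by auto
    have bb: "b \<in> block lam (bi a)" using sb_block[OF ab(2) ia(2) ia(1)] .
    have tt: "\<theta> a = \<theta> b" using cb ab(2) unfolding CB_def by blast
    have w2: "w = tv n (q a) (q b) (\<theta> a * \<zeta>) (- (\<theta> a * \<zeta>))"
      using w unfolding h_def mono_tv[OF qp abn less_imp_neq[OF ab(1)]] tt by simp
    have qab: "q a \<in> block lam (tg (bi a))" "q b \<in> block lam (tg (bi a))"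
      using F4[OF ia] F4[OF ia(1) bb] by auto
    have sq: "SB (q a) (q b)" using sb_blockI[OF qab] F2[OF ia(1)] by blast
    have la: "lo (bi a) \<le> a" "lo (bi a) \<le> b" "a < hi (bi a)" "b < hi (bi a)"
      using ia(2) bb unfolding blk by auto
    have c: "hi (tg (bi a)) - lo (tg (bi a)) = hi (bi a) - lo (bi a)" using F3[OF ia(1)] .
    show "w \<in> J"
    proof (cases "\<theta> a \<in> mu kq")
      case True
      hence "q a < q b" using F4[OF ia] F4[OF ia(1) bb] tt ab(1) la by auto
      thus ?thesis unfolding w2 using J_mem[OF mu_mult[OF True z] _ sq] by blast
    next
      case False
      hence m: "- \<theta> a \<in> mu kq" using mu_split th abn by blast
      have "q b < q a" using F4[OF ia] F4[OF ia(1) bb] tt ab(1) la c False by auto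
      moreover have "w = tv n (q b) (q a) (- (\<theta> a * \<zeta>)) (- (- (\<theta> a * \<zeta>)))"
        unfolding w2 using tv_swap[of "q a" "q b"] calculation by simp
      moreover have "- (\<theta> a * \<zeta>) \<in> mu kq" using mu_mult[OF m z] by simp
      ultimately show ?thesis using J_mem sb_sym[OF sq] by blast
    qed
  qed
  have "(\<lambda>v. h *\<^sub>v v) ` J = J" using stab_of_sub[OF h_def qp nz sub] .
  moreover have "monomial_mat n \<sigma> (\<lambda>_. 1) \<in> P" unfolding inP using sp ss by blast
  ultimately show ?thesis using hG gh by blast
qed



lemma main:
  "\<exists>J. (\<forall>u\<in>J. \<exists>r\<in>P. is_reflection n r \<and> is_root n r u)
     \<and> is_semidirect n (normaliser G P) P (set_stabiliser G J)"
proof (intro exI[of _ J] conjI)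
  show "\<forall>u\<in>J. \<exists>r\<in>P. is_reflection n r \<and> is_root n r u"
  proof
    fix u assume "u \<in> J"
    then obtain \<zeta> a b where u: "u = tv n a b \<zeta> (-\<zeta>)" "\<zeta> \<in> mu kq" "a < b" "SB a b" unfolding J_def by blast
    have abn: "a < n" "b < n" using sb_lt[OF part u(4)] by auto
    show "\<exists>r\<in>P. is_reflection n r \<and> is_root n r u"
      using tr_P[OF u(4)] reflection_tr[OF abn less_imp_neq[OF u(3)] mu_kq_nz[OF u(2)]] u(1) by blast
  qed
  show "is_semidirect n (normaliser G P) P (set_stabiliser G J)"
    unfolding is_semidirect_def
  proof (intro conjI)
    show "normaliser G P = {a * b |a b. a \<in> P \<and> b \<in> set_stabiliser G J}"
    proof (intro equalityI subsetI)
      fix x assume xN: "x \<in> normaliser G P"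
      hence "x \<in> G" unfolding normaliser_def by blast
      then obtain \<pi> \<theta> where x: "x = monomial_mat n \<pi> \<theta>" and pp: "\<pi> permutes {0..<n}"
        and th: "\<forall>i<n. \<theta> i \<in> mu m" and pr: "(\<Prod>i<n. \<theta> i) ^ (m div p) = 1" unfolding inG by blast
      have nz: "\<forall>j<n. \<theta> j \<noteq> 0" using th mu_m_nz by blast
      have "BP \<pi> \<and> CB \<theta>" using BP_of_norm[OF x pp nz xN] .
      then obtain a b where "a \<in> P" "b \<in> G" "(\<lambda>v. b *\<^sub>v v) ` J = J" "x = a * b"
        using decomp[OF x pp th pr] by blast
      thus "x \<in> {a * b |a b. a \<in> P \<and> b \<in> set_stabiliser G J}"
        unfolding set_stabiliser_def by blast
    next
      fix x assume "x \<in> {a * b |a b. a \<in> P \<and> b \<in> set_stabiliser G J}"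
      then obtain a b where x: "x = a * b" and aP: "a \<in> P" and bS: "b \<in> set_stabiliser G J" by blast
      obtain \<sigma> where a: "a = monomial_mat n \<sigma> (\<lambda>_. 1)" and sp: "\<sigma> permutes {0..<n}"
        and ss: "\<forall>a<n. SB a (\<sigma> a)" using aP unfolding inP by blast
      have bG: "b \<in> G" and bst: "(\<lambda>v. b *\<^sub>v v) ` J = J" using bS unfolding set_stabiliser_def by auto
      then obtain \<pi> \<theta> where b: "b = monomial_mat n \<pi> \<theta>" and pp: "\<pi> permutes {0..<n}"
        and th: "\<forall>i<n. \<theta> i \<in> mu m" and pr: "(\<Prod>i<n. \<theta> i) ^ (m div p) = 1" unfolding inG by blast
      have nz: "\<forall>j<n. \<theta> j \<noteq> 0" using th mu_m_nz by blast
      have bc: "BP \<pi>" "CB \<theta>" using BP_of_stab[OF b pp nz bst] by auto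
      have ab: "x = monomial_mat n (\<sigma> \<circ> \<pi>) \<theta>" unfolding x a b mono_mult[OF pp] by simp
      have cp: "\<sigma> \<circ> \<pi> permutes {0..<n}" by (rule permutes_compose[OF pp sp])
      have xG: "x \<in> G" unfolding inG using ab cp th pr by blast
      have bs: "BP \<sigma>" using P_BP[OF sp ss] .
      have "BP (\<sigma> \<circ> \<pi>)" unfolding BP_def
      proof (intro allI impI)
        fix c d assume cd: "c < n" "d < n"
        have "SB c d = SB (\<pi> c) (\<pi> d)" using bc(1) cd unfolding BP_def by blast
        also have "\<dots> = SB (\<sigma> (\<pi> c)) (\<sigma> (\<pi> d))" using bs perm_lt[OF pp] cd unfolding BP_def by blast
        finally show "SB c d = SB ((\<sigma> \<circ> \<pi>) c) ((\<sigma> \<circ> \<pi>) d)" by simp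
      qed
      thus "x \<in> normaliser G P" using norm_of_BP[OF ab xG cp _ bc(2)] by blast
    qed
    show "P \<inter> set_stabiliser G J = {1\<^sub>m n}"
    proof (intro equalityI subsetI)
      fix x assume "x \<in> P \<inter> set_stabiliser G J"
      thus "x \<in> {1\<^sub>m n}" using P_stab_one unfolding set_stabiliser_def by blast
    next
      fix x :: "complex mat" assume "x \<in> {1\<^sub>m n}"
      hence x: "x = 1\<^sub>m n" by simp
      have "(\<lambda>v. 1\<^sub>m n *\<^sub>v v) ` J = J"
      proof -
        have "(\<lambda>v. 1\<^sub>m n *\<^sub>v v) ` J = (\<lambda>v. v) ` J"
          by (rule image_cong) (use J_carrier in auto)
        thus ?thesis by simp
      qed
      thus "x \<in> P \<inter> set_stabiliser G J" using x one_P one_G unfolding set_stabiliser_def by blast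
    qed
    show "\<forall>g\<in>normaliser G P. {g * h |h. h \<in> P} = {h * g |h. h \<in> P}"
      unfolding normaliser_def by blast
  qed
qed


end


theorem corollary4:
  fixes m p n :: nat and lam :: "nat list"
  assumes "0 < m" "0 < p" "0 < n" "p dvd m"
    and "odd m \<or> (\<exists>k. odd k \<and> m = 2 * k)"
    and "is_partition lam n"
  shows "\<exists>J. (\<forall>u\<in>J. \<exists>r\<in>std_parabolic n lam. is_reflection n r \<and> is_root n r u)
           \<and> is_semidirect n (normaliser (Gmpn m p n) (std_parabolic n lam))
                (std_parabolic n lam) (set_stabiliser (Gmpn m p n) J)"
proof -
  interpret cs m p n lam using assms by unfold_locales
  show ?thesis by (rule main)
qed

end
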